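(* Let $c\in\mathbb{R}$ and let $\kappa:(c,\infty)\to\mathbb{R}$ be a function which is bounded from above with $\kappa(x)\to0$ as $x\to\infty$. Then $\kappa$ has a majorant $\gamma:(c,\infty)\to\mathbb{R}$ (i.e. $\gamma\ge\kappa$) of class $C^\infty$ such that $\gamma(x)\to0$ as $x\to\infty$ and $$(-1)^k\gamma^{(k)}(x)\ge0,\qquad x>c,\ k=0,1,2,\dots.$$ *)

theory Defs
  imports "HOL-Analysis.Analysis"
begin

definition smooth_on :: "real set \<Rightarrow> (real \<Rightarrow> real) \<Rightarrow> bool" where
  "smooth_on S f \<longleftrightarrow> (\<forall>k::nat. \<forall>x\<in>S. ((deriv ^^ k) f) differentiable (at x))"

end

theory Submission
  imports Defs
begin

lemma term_bound:
  fixes a :: "nat \<Rightarrow> real"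
  assumes "a m \<ge> 0" "x > c"
  shows "norm (a m * (-1/real(Suc m))^k * exp((c-x)/real(Suc m))) \<le> a m"
proof -
  have "\<bar>(-1/real(Suc m))^k\<bar> \<le> 1"
    by (simp add: power_abs power_le_one)
  moreover have "exp((c-x)/real(Suc m)) \<le> 1" using assms by (simp add: divide_nonpos_pos)
  ultimately have "\<bar>(-1/real(Suc m))^k\<bar> * exp((c-x)/real(Suc m)) \<le> 1"
    by (simp add: mult_le_one)
  then have "a m * (\<bar>(-1/real(Suc m))^k\<bar> * exp((c-x)/real(Suc m))) \<le> a m * 1"
    using assms by (intro mult_left_mono) auto
  then show ?thesis using assms by (simp add: abs_mult)
qed

lemma term_deriv:
  "((\<lambda>x. a * (-1/b)^k * exp((c-x)/b)) has_field_derivative (a * (-1/b)^Suc k * exp((c-x)/b))) (at x)"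
  if "b \<noteq> 0" for a b :: real
proof -
  have "((\<lambda>x. a * (-1/b)^k * exp((c-x)/b)) has_field_derivative (a * (-1/b)^k * (exp((c-x)/b) * (-1/b)))) (at x)"
    using that by (auto intro!: derivative_eq_intros)
  moreover have "a * (-1/b)^k * (exp((c-x)/b) * (-1/b)) = a * (-1/b)^Suc k * exp((c-x)/b)"
    by (simp add: power_Suc algebra_simps)
  ultimately show ?thesis by simp
qed

lemma series_deriv:
  fixes a :: "nat \<Rightarrow> real"
  assumes a0: "\<And>m. a m \<ge> 0" and sa: "summable a" and x: "x > c"
  shows "((\<lambda>x. \<Sum>m. a m * (-1/real(Suc m))^k * exp((c-x)/real(Suc m))) has_field_derivative
          (\<Sum>m. a m * (-1/real(Suc m))^Suc k * exp((c-x)/real(Suc m)))) (at x)"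
proof (rule has_field_derivative_series'(2)[where S="{c<..}" and x0=x])
  show "convex {c<..}" by simp
  show "\<And>n y. y \<in> {c<..} \<Longrightarrow> ((\<lambda>x. a n * (-1/real(Suc n))^k * exp((c-x)/real(Suc n)))
     has_field_derivative a n * (-1/real(Suc n))^Suc k * exp((c-y)/real(Suc n))) (at y within {c<..})"
    by (rule has_field_derivative_at_within, rule term_deriv) auto
  show "uniformly_convergent_on {c<..} (\<lambda>n x. \<Sum>i<n. a i * (-1/real(Suc i))^Suc k * exp((c-x)/real(Suc i)))"
  proof (rule Weierstrass_m_test'[OF _ sa])
    fix n y assume "y \<in> {c<..}"
    then show "norm (a n * (-1/real(Suc n))^Suc k * exp((c-y)/real(Suc n))) \<le> a n"
      by (intro term_bound a0) auto
  qed
  show "x \<in> {c<..}" using x by simp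
  show "x \<in> interior {c<..}" using x by (simp add: interior_open)
  show "summable (\<lambda>n. a n * (-1/real(Suc n))^k * exp((c-x)/real(Suc n)))"
    by (rule summable_comparison_test[OF _ sa]) (use term_bound a0 x in auto)
qed

lemma term_lim0: "((\<lambda>x. exp((c-x)/real(Suc m))) \<longlongrightarrow> 0) at_top"
proof -
  have "filterlim (\<lambda>x::real. -c + x) at_top at_top"
    by (rule filterlim_tendsto_add_at_top[OF tendsto_const filterlim_ident])
  then have "filterlim (\<lambda>x::real. (1/real(Suc m)) * (-c + x)) at_top at_top"
    using filterlim_tendsto_pos_mult_at_top[OF tendsto_const, of "1/real(Suc m)"] by auto
  then have "filterlim (\<lambda>x::real. - ((1/real(Suc m)) * (-c + x))) at_bot at_top"
    by (simp add: filterlim_uminus_at_bot)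
  then have "((\<lambda>x. exp (- ((1/real(Suc m)) * (-c + x)))) \<longlongrightarrow> 0) at_top"
    by (rule filterlim_compose[OF exp_at_bot])
  moreover have "\<And>x. - ((1/real(Suc m)) * (-c + x)) = (c-x)/real(Suc m)"
    by (simp add: field_simps)
  ultimately show ?thesis by simp
qed

theorem claim8p3:
  fixes c :: real and \<kappa> :: "real \<Rightarrow> real"
  assumes bdd: "\<exists>M. \<forall>x>c. \<kappa> x \<le> M"
    and lim: "(\<kappa> \<longlongrightarrow> 0) at_top"
  shows "\<exists>\<gamma> :: real \<Rightarrow> real.
           (\<forall>x>c. \<kappa> x \<le> \<gamma> x)
         \<and> smooth_on {c<..} \<gamma>
         \<and> (\<gamma> \<longlongrightarrow> 0) at_top
         \<and> (\<forall>k::nat. \<forall>x>c. (-1) ^ k * (deriv ^^ k) \<gamma> x \<ge> 0)"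
proof -
  obtain M where M: "\<And>x. x > c \<Longrightarrow> \<kappa> x \<le> M" using bdd by blast
  define s where "s n = Sup ((\<lambda>x. max 0 (\<kappa> x)) ` {c + real n<..})" for n
  have bdd_n: "bdd_above ((\<lambda>x. max 0 (\<kappa> x)) ` {c + real n<..})" for n
  proof (rule bdd_aboveI[where M="max 0 M"])
    fix y assume "y \<in> (\<lambda>x. max 0 (\<kappa> x)) ` {c + real n<..}"
    then obtain x where "x > c + real n" "y = max 0 (\<kappa> x)" by auto
    then show "y \<le> max 0 M" using M[of x] by auto
  qed
  have s_ge: "max 0 (\<kappa> x) \<le> s n" if "x > c + real n" for x n
    unfolding s_def using that by (intro cSup_upper bdd_n) auto
  have s_nonneg: "0 \<le> s n" for n
    using s_ge[of n "c + real n + 1"] by auto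
  have s_mono: "s (Suc n) \<le> s n" for n
    unfolding s_def
    by (rule cSup_subset_mono) (auto intro: bdd_n)
  have s_lim: "s \<longlonglongrightarrow> 0"
  proof (rule LIMSEQ_I)
    fix r :: real assume r: "r > 0"
    have "eventually (\<lambda>x. dist (\<kappa> x) 0 < r/2) at_top"
      using lim r by (intro tendstoD) auto
    then obtain X where X: "\<And>x. x \<ge> X \<Longrightarrow> \<bar>\<kappa> x\<bar> < r/2"
      by (auto simp: eventually_at_top_linorder)
    show "\<exists>no. \<forall>n\<ge>no. norm (s n - 0) < r"
    proof (intro exI allI impI)
      fix n assume n: "n \<ge> nat \<lceil>X - c\<rceil>"
      have "real n \<ge> X - c" using n by linarith
      have "s n \<le> r/2"
        unfolding s_def
      proof (rule cSup_least)
        show "(\<lambda>x. max 0 (\<kappa> x)) ` {c + real n<..} \<noteq> {}" by auto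
        fix y assume "y \<in> (\<lambda>x. max 0 (\<kappa> x)) ` {c + real n<..}"
        then obtain x where "x > c + real n" "y = max 0 (\<kappa> x)" by auto
        then show "y \<le> r/2" using X[of x] \<open>real n \<ge> X - c\<close> r by auto
      qed
      then show "norm (s n - 0) < r" using s_nonneg[of n] r by auto
    qed
  qed
  define a where "a m = exp 1 * (s m - s (Suc m))" for m
  have a0: "\<And>m. a m \<ge> 0" unfolding a_def using s_mono by simp
  have tel: "(\<lambda>m. s (m + n) - s (Suc (m + n))) sums s n" for n
  proof -
    have "(\<lambda>m. s (m + n)) \<longlonglongrightarrow> 0" using LIMSEQ_ignore_initial_segment[OF s_lim] by simp
    from telescope_sums'[OF this] show ?thesis by simp
  qed
  have sa: "summable a"
    unfolding a_def using tel[of 0] by (intro summable_mult) (auto simp: sums_iff)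
  define F where "F k x = (\<Sum>m. a m * (-1/real(Suc m))^k * exp((c-x)/real(Suc m)))" for k x
  define \<gamma> where "\<gamma> = F 0"
  have Fd: "(F k has_field_derivative F (Suc k) x) (at x)" if "x > c" for k x
    unfolding F_def using series_deriv[OF a0 sa that] by simp
  have Dk: "\<forall>x>c. (deriv ^^ k) \<gamma> x = F k x" for k
  proof (induction k)
    case 0 then show ?case by (simp add: \<gamma>_def)
  next
    case (Suc k)
    show ?case
    proof (intro allI impI)
      fix x assume x: "x > c"
      have "eventually (\<lambda>y. y \<in> {c<..}) (nhds x)"
        using x by (intro eventually_nhds_in_open) auto
      then have "eventually (\<lambda>y. (deriv ^^ k) \<gamma> y = F k y) (nhds x)"
        by eventually_elim (use Suc in auto)
      then have "deriv ((deriv ^^ k) \<gamma>) x = deriv (F k) x"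
        by (rule deriv_cong_ev) simp
      also have "\<dots> = F (Suc k) x" using Fd[OF x] by (rule DERIV_imp_deriv)
      finally show "(deriv ^^ Suc k) \<gamma> x = F (Suc k) x" by simp
    qed
  qed
  have term_sum: "summable (\<lambda>m. a m * (-1/real(Suc m))^k * exp((c-x)/real(Suc m)))" if "x > c" for k x
    by (rule summable_comparison_test[OF _ sa]) (use term_bound a0 that in auto)
  have smooth: "smooth_on {c<..} \<gamma>"
    unfolding smooth_on_def
  proof (intro allI ballI)
    fix k x assume "x \<in> {c<..}"
    then have x: "x > c" by simp
    have "((deriv ^^ k) \<gamma> has_field_derivative F (Suc k) x) (at x)"
      by (rule has_field_derivative_transform_within_open[OF Fd[OF x], of "{c<..}"])
         (use x Dk in auto)
    then show "(deriv ^^ k) \<gamma> differentiable (at x)"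
      unfolding differentiable_def has_field_derivative_def by blast
  qed
  have sign: "(-1) ^ k * (deriv ^^ k) \<gamma> x \<ge> 0" if x: "x > c" for k x
  proof -
    have "(-1) ^ k * (deriv ^^ k) \<gamma> x = (-1)^k * F k x" using Dk x by simp
    also have "\<dots> = (\<Sum>m. (-1)^k * (a m * (-1/real(Suc m))^k * exp((c-x)/real(Suc m))))"
      unfolding F_def by (rule suminf_mult[OF term_sum[OF x], symmetric])
    also have "\<dots> \<ge> 0"
    proof (rule suminf_nonneg)
      show "summable (\<lambda>m. (-1)^k * (a m * (-1/real(Suc m))^k * exp((c-x)/real(Suc m))))"
        by (rule summable_mult[OF term_sum[OF x]])
      fix m
      have eqk: "(-1)^k * (-1/real(Suc m))^k = (1/real(Suc m))^k"
        by (simp only: power_mult_distrib[symmetric]) simp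
      have "(-1)^k * (a m * (-1/real(Suc m))^k * exp((c-x)/real(Suc m)))
            = a m * ((-1)^k * (-1/real(Suc m))^k) * exp((c-x)/real(Suc m))"
        by (simp add: mult_ac)
      also have "\<dots> \<ge> 0" using a0[of m] unfolding eqk by simp
      finally show "0 \<le> (-1)^k * (a m * (-1/real(Suc m))^k * exp((c-x)/real(Suc m)))" .
    qed
    finally show ?thesis .
  qed
  have glim: "(\<gamma> \<longlongrightarrow> 0) at_top"
  proof -
    have "((\<lambda>x. \<Sum>m. a m * exp((c-x)/real(Suc m))) \<longlongrightarrow> (\<Sum>m. (0::real))) at_top"
    proof (rule conjunct2[OF conjunct2[OF tannerys_theorem[where M=a]]])
      show "((\<lambda>x. a k * exp((c-x)/real(Suc k))) \<longlongrightarrow> 0) at_top" for k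
        using tendsto_mult[OF tendsto_const[of "a k"] term_lim0[of c k]] by simp
      have "eventually (\<lambda>p. True \<and> snd p > c) (sequentially \<times>\<^sub>F at_top)"
        by (rule eventually_prodI[OF always_eventually eventually_gt_at_top]) auto
      then show "eventually (\<lambda>(k,x). norm (a k * exp((c-x)/real(Suc k))) \<le> a k) (at_top \<times>\<^sub>F at_top)"
      proof (rule eventually_mono)
        fix p :: "nat \<times> real" assume "True \<and> snd p > c"
        then show "(\<lambda>(k,x). norm (a k * exp((c-x)/real(Suc k))) \<le> a k) p"
          using term_bound[where a=a and m="fst p" and x="snd p" and c=c and k=0] a0 by (cases p) auto
      qed
      show "summable a" by (rule sa)
      show "(at_top :: real filter) \<noteq> bot" by simp
    qed
    moreover have "\<gamma> = (\<lambda>x. \<Sum>m. a m * exp((c-x)/real(Suc m)))"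
      unfolding \<gamma>_def by (rule ext) (simp add: F_def)
    ultimately show ?thesis by (simp only: suminf_zero)
  qed
  have dom: "\<kappa> x \<le> \<gamma> x" if x: "x > c" for x
  proof -
    define n where "n = nat (\<lceil>x - c\<rceil> - 1)"
    have n1: "real n < x - c" "x - c \<le> real n + 1"
    proof -
      have ce: "\<lceil>x - c\<rceil> \<ge> 1" using x by simp
      have rn: "real n = of_int \<lceil>x - c\<rceil> - 1" using ce by (simp add: n_def)
      show "real n < x - c" "x - c \<le> real n + 1"
        using rn ceiling_correct[of "x - c"] by linarith+
    qed
    define t where "t = (\<lambda>m. a m * exp((c-x)/real(Suc m)))"
    have st: "summable t" unfolding t_def using term_sum[OF x, of 0] by simp
    have t0: "t m \<ge> 0" for m using a0[of m] by (simp add: t_def)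
    have "\<gamma> x = (\<Sum>m. t (m + n)) + (\<Sum>i<n. t i)"
    proof -
      have "\<gamma> x = suminf t" by (simp add: \<gamma>_def F_def t_def)
      then show ?thesis using suminf_split_initial_segment[OF st] by simp
    qed
    also have "\<dots> \<ge> (\<Sum>m. t (m + n))" using t0 by (simp add: sum_nonneg)
    also have "(\<Sum>m. t (m + n)) \<ge> (\<Sum>m. s (m + n) - s (Suc (m + n)))"
    proof (rule suminf_le)
      show "summable (\<lambda>m. s (m + n) - s (Suc (m + n)))" using tel[of n] by (simp add: sums_iff)
      show "summable (\<lambda>m. t (m + n))" using st by (rule summable_ignore_initial_segment)
      fix m
      have "x - c \<le> real (Suc (m + n))" using n1 by simp
      then have "(c - x) / real (Suc (m + n)) \<ge> -1"
        by (simp add: le_divide_eq)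
      then have "exp ((c - x) / real (Suc (m + n))) \<ge> exp (-1)" by simp
      then have "t (m + n) \<ge> a (m+n) * exp (-1)"
        unfolding t_def using a0 by (intro mult_left_mono) auto
      also have "a (m+n) * exp (-1) = (s (m + n) - s (Suc (m + n))) * (exp 1 * exp (-1))"
        by (simp add: a_def mult_ac)
      also have "\<dots> = s (m + n) - s (Suc (m + n))"
        by (simp add: exp_minus)
      finally show "s (m + n) - s (Suc (m + n)) \<le> t (m + n)" .
    qed
    also have "(\<Sum>m. s (m + n) - s (Suc (m + n))) = s n" using tel[of n] by (simp add: sums_iff)
    also have "s n \<ge> max 0 (\<kappa> x)" using s_ge[of n x] n1 by simp
    finally show ?thesis by simp
  qed
  show ?thesis using dom smooth glim sign by blast
qed

end
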